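(* Every inductive poset is divisional.
   Context: All posets are finite, have a unique minimal element $\hat0$ and are ranked; $\chi_{\mathcal{P}}(t)=\sum_x\mu(\hat0,x)t^{\operatorname{rk}(\mathcal{P})-\operatorname{rk}(x)}$ with $\operatorname{rk}(\mathcal{P})=\max\operatorname{rk}$. Atoms are rank-1 elements, $A(\mathcal{P})$ their set; $\bigvee T$ is the set of minimal upper bounds of $T$. A lattice is geometric if $y$ covers $x$ iff there is an atom $a\not\le x$ with $y=x\vee a$; $\mathcal{P}$ is locally geometric if each $\mathcal{P}_{\le x}$ is a geometric lattice. For an atom $a$: $\mathcal{P}'$ is the subposet consisting of $\hat0$ and all elements of $\bigvee T$ for nonempty $T\subseteq A(\mathcal{P})\setminus\{a\}$; $\mathcal{P}''=\mathcal{P}_{\ge a}$ (minimal element $a$, rank $\operatorname{rk}-1$). Inductive posets: smallest class of locally geometric posets containing $\{\hat0\}$ and containing $\mathcal{P}$ whenever some atom $a$ has $\mathcal{P}',\mathcal{P}''$ inductive and $\chi_{\mathcal{P}''}\mid\chi_{\mathcal{P}'}$. Divisional posets: smallest class of locally geometric posets containing $\{\hat0\}$ and containing $\mathcal{P}$ whenever some atom $a$ has $\mathcal{P}''$ divisional and $\chi_{\mathcal{P}''}\mid\chi_{\mathcal{P}}$. *)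

theory Defs
  imports Main "HOL-Computational_Algebra.Polynomial"
begin

text \<open>A poset is a finite carrier set P together with an ambient relation le
(restricted to P). Subposets (P', P'') use the same relation restricted to
a smaller carrier.\<close>

definition is_poset :: "('a \<Rightarrow> 'a \<Rightarrow> bool) \<Rightarrow> 'a set \<Rightarrow> bool" where
  "is_poset le P \<longleftrightarrow> finite P \<and> P \<noteq> {} \<and>
     (\<forall>x\<in>P. le x x) \<and>
     (\<forall>x\<in>P. \<forall>y\<in>P. le x y \<and> le y x \<longrightarrow> x = y) \<and>
     (\<forall>x\<in>P. \<forall>y\<in>P. \<forall>z\<in>P. le x y \<and> le y z \<longrightarrow> le x z)"

text \<open>Unique minimal element (for finite posets: a least element).\<close>
definition has_bottom :: "('a \<Rightarrow> 'a \<Rightarrow> bool) \<Rightarrow> 'a set \<Rightarrow> bool" where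
  "has_bottom le P \<longleftrightarrow> (\<exists>z\<in>P. \<forall>x\<in>P. le z x)"

definition bottom :: "('a \<Rightarrow> 'a \<Rightarrow> bool) \<Rightarrow> 'a set \<Rightarrow> 'a" where
  "bottom le P = (THE z. z \<in> P \<and> (\<forall>x\<in>P. le z x))"

definition covers :: "('a \<Rightarrow> 'a \<Rightarrow> bool) \<Rightarrow> 'a set \<Rightarrow> 'a \<Rightarrow> 'a \<Rightarrow> bool" where
  "covers le P x y \<longleftrightarrow> x \<in> P \<and> y \<in> P \<and> le x y \<and> x \<noteq> y \<and>
     \<not> (\<exists>z\<in>P. le x z \<and> le z y \<and> z \<noteq> x \<and> z \<noteq> y)"

definition is_rank_fun :: "('a \<Rightarrow> 'a \<Rightarrow> bool) \<Rightarrow> 'a set \<Rightarrow> ('a \<Rightarrow> nat) \<Rightarrow> bool" where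
  "is_rank_fun le P rk \<longleftrightarrow> rk (bottom le P) = 0 \<and>
     (\<forall>x\<in>P. \<forall>y\<in>P. covers le P x y \<longrightarrow> rk y = Suc (rk x))"

definition ranked :: "('a \<Rightarrow> 'a \<Rightarrow> bool) \<Rightarrow> 'a set \<Rightarrow> bool" where
  "ranked le P \<longleftrightarrow> (\<exists>rk. is_rank_fun le P rk)"

definition rank :: "('a \<Rightarrow> 'a \<Rightarrow> bool) \<Rightarrow> 'a set \<Rightarrow> 'a \<Rightarrow> nat" where
  "rank le P = (SOME rk. is_rank_fun le P rk)"

definition poset_rank :: "('a \<Rightarrow> 'a \<Rightarrow> bool) \<Rightarrow> 'a set \<Rightarrow> nat" where
  "poset_rank le P = Max (rank le P ` P)"

text \<open>Moebius function x \<mapsto> mu(0,x), determined by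
  sum_{0 <= y <= x} mu(0,y) = delta(0,x).\<close>
definition mobius :: "('a \<Rightarrow> 'a \<Rightarrow> bool) \<Rightarrow> 'a set \<Rightarrow> 'a \<Rightarrow> int" where
  "mobius le P = (THE f.
     (\<forall>x\<in>P. (\<Sum>y\<in>{y\<in>P. le y x}. f y) = (if x = bottom le P then 1 else 0)) \<and>
     (\<forall>x. x \<notin> P \<longrightarrow> f x = 0))"

definition char_poly :: "('a \<Rightarrow> 'a \<Rightarrow> bool) \<Rightarrow> 'a set \<Rightarrow> int poly" where
  "char_poly le P = (\<Sum>x\<in>P. monom (mobius le P x) (poset_rank le P - rank le P x))"

definition atoms :: "('a \<Rightarrow> 'a \<Rightarrow> bool) \<Rightarrow> 'a set \<Rightarrow> 'a set" where
  "atoms le P = {a \<in> P. covers le P (bottom le P) a}"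

definition upper_bound :: "('a \<Rightarrow> 'a \<Rightarrow> bool) \<Rightarrow> 'a set \<Rightarrow> 'a set \<Rightarrow> 'a \<Rightarrow> bool" where
  "upper_bound le P T u \<longleftrightarrow> u \<in> P \<and> (\<forall>t\<in>T. le t u)"

definition lower_bound :: "('a \<Rightarrow> 'a \<Rightarrow> bool) \<Rightarrow> 'a set \<Rightarrow> 'a set \<Rightarrow> 'a \<Rightarrow> bool" where
  "lower_bound le P T u \<longleftrightarrow> u \<in> P \<and> (\<forall>t\<in>T. le u t)"

definition is_lub :: "('a \<Rightarrow> 'a \<Rightarrow> bool) \<Rightarrow> 'a set \<Rightarrow> 'a set \<Rightarrow> 'a \<Rightarrow> bool" where
  "is_lub le P T u \<longleftrightarrow> upper_bound le P T u \<and> (\<forall>v. upper_bound le P T v \<longrightarrow> le u v)"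

definition is_glb :: "('a \<Rightarrow> 'a \<Rightarrow> bool) \<Rightarrow> 'a set \<Rightarrow> 'a set \<Rightarrow> 'a \<Rightarrow> bool" where
  "is_glb le P T u \<longleftrightarrow> lower_bound le P T u \<and> (\<forall>v. lower_bound le P T v \<longrightarrow> le v u)"

definition min_upper_bounds :: "('a \<Rightarrow> 'a \<Rightarrow> bool) \<Rightarrow> 'a set \<Rightarrow> 'a set \<Rightarrow> 'a set" where
  "min_upper_bounds le P T = {u. upper_bound le P T u \<and>
      (\<forall>v. upper_bound le P T v \<and> le v u \<longrightarrow> v = u)}"

definition is_lattice :: "('a \<Rightarrow> 'a \<Rightarrow> bool) \<Rightarrow> 'a set \<Rightarrow> bool" where
  "is_lattice le L \<longleftrightarrow> is_poset le L \<and>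
     (\<forall>x\<in>L. \<forall>y\<in>L. (\<exists>u. is_lub le L {x, y} u) \<and> (\<exists>u. is_glb le L {x, y} u))"

definition geometric :: "('a \<Rightarrow> 'a \<Rightarrow> bool) \<Rightarrow> 'a set \<Rightarrow> bool" where
  "geometric le L \<longleftrightarrow> is_lattice le L \<and>
     (\<forall>x\<in>L. \<forall>y\<in>L. covers le L x y \<longleftrightarrow>
        (\<exists>a\<in>atoms le L. \<not> le a x \<and> is_lub le L {x, a} y))"

definition down_set :: "('a \<Rightarrow> 'a \<Rightarrow> bool) \<Rightarrow> 'a set \<Rightarrow> 'a \<Rightarrow> 'a set" where
  "down_set le P x = {y \<in> P. le y x}"

definition up_set :: "('a \<Rightarrow> 'a \<Rightarrow> bool) \<Rightarrow> 'a set \<Rightarrow> 'a \<Rightarrow> 'a set" where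
  "up_set le P x = {y \<in> P. le x y}"

definition locally_geometric :: "('a \<Rightarrow> 'a \<Rightarrow> bool) \<Rightarrow> 'a set \<Rightarrow> bool" where
  "locally_geometric le P \<longleftrightarrow> is_poset le P \<and> has_bottom le P \<and> ranked le P \<and>
     (\<forall>x\<in>P. geometric le (down_set le P x))"

definition deletion :: "('a \<Rightarrow> 'a \<Rightarrow> bool) \<Rightarrow> 'a set \<Rightarrow> 'a \<Rightarrow> 'a set" where
  "deletion le P a = insert (bottom le P)
     (\<Union>{min_upper_bounds le P T | T. T \<subseteq> atoms le P - {a} \<and> T \<noteq> {}})"

definition restriction :: "('a \<Rightarrow> 'a \<Rightarrow> bool) \<Rightarrow> 'a set \<Rightarrow> 'a \<Rightarrow> 'a set" where
  "restriction le P a = up_set le P a"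

inductive inductive_poset :: "('a \<Rightarrow> 'a \<Rightarrow> bool) \<Rightarrow> 'a set \<Rightarrow> bool" for le where
  base: "locally_geometric le {z} \<Longrightarrow> inductive_poset le {z}"
| step: "locally_geometric le P \<Longrightarrow> a \<in> atoms le P \<Longrightarrow>
         inductive_poset le (deletion le P a) \<Longrightarrow>
         inductive_poset le (restriction le P a) \<Longrightarrow>
         char_poly le (restriction le P a) dvd char_poly le (deletion le P a) \<Longrightarrow>
         inductive_poset le P"

inductive divisional_poset :: "('a \<Rightarrow> 'a \<Rightarrow> bool) \<Rightarrow> 'a set \<Rightarrow> bool" for le where
  base: "locally_geometric le {z} \<Longrightarrow> divisional_poset le {z}"
| step: "locally_geometric le P \<Longrightarrow> a \<in> atoms le P \<Longrightarrow>
         divisional_poset le (restriction le P a) \<Longrightarrow>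
         char_poly le (restriction le P a) dvd char_poly le P \<Longrightarrow>
         divisional_poset le P"

end

theory Submission
  imports Defs
begin


lemma bottom_eq:
  assumes "is_poset le Q" "z \<in> Q" "\<forall>x\<in>Q. le z x"
  shows "bottom le Q = z"
  unfolding bottom_def
proof (rule the_equality)
  show "z \<in> Q \<and> (\<forall>x\<in>Q. le z x)" using assms by blast
  fix w assume "w \<in> Q \<and> (\<forall>x\<in>Q. le w x)"
  then show "w = z" using assms unfolding is_poset_def by blast
qed

lemma bottom_props:
  assumes "is_poset le Q" "has_bottom le Q"
  shows "bottom le Q \<in> Q" "\<And>x. x\<in>Q \<Longrightarrow> le (bottom le Q) x"
  using assms bottom_eq unfolding has_bottom_def by metis+

lemma exists_maximal:
  assumes "is_poset le Q" "S \<subseteq> Q" "S \<noteq> {}"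
  shows "\<exists>z\<in>S. \<forall>w\<in>S. le z w \<longrightarrow> w = z"
proof -
  define f where "f z = card {y\<in>Q. le z y}" for z
  have finQ: "finite Q" using assms unfolding is_poset_def by blast
  have fin: "finite S" using assms finite_subset finQ by blast
  obtain z where z: "is_arg_min f (\<lambda>x. x \<in> S) z"
    using ex_is_arg_min_if_finite[OF fin assms(3)] by blast
  have zS: "z \<in> S" and zmax: "\<forall>w\<in>S. \<not> f w < f z"
    using z unfolding is_arg_min_def by auto
  show ?thesis
  proof (intro bexI[OF _ zS] ballI impI)
    fix w assume wS: "w \<in> S" and lzw: "le z w"
    show "w = z"
    proof (rule ccontr)
      assume ne: "w \<noteq> z"
      have "{y\<in>Q. le w y} \<subset> {y\<in>Q. le z y}"
      proof
        show "{y\<in>Q. le w y} \<subseteq> {y\<in>Q. le z y}"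
          using assms(1,2) zS wS lzw unfolding is_poset_def by blast
        have "le z z" "z \<in> Q" "\<not> le w z"
          using assms(1,2) zS wS lzw ne unfolding is_poset_def by blast+
        then show "{y\<in>Q. le w y} \<noteq> {y\<in>Q. le z y}" by blast
      qed
      then have "f w < f z" unfolding f_def by (rule psubset_card_mono[rotated]) (use finQ in auto)
      then show False using zmax wS by blast
    qed
  qed
qed

lemma is_poset_flip: "is_poset le Q \<Longrightarrow> is_poset (\<lambda>x y. le y x) Q"
  unfolding is_poset_def by blast

lemma exists_minimal:
  assumes "is_poset le Q" "S \<subseteq> Q" "S \<noteq> {}"
  shows "\<exists>z\<in>S. \<forall>w\<in>S. le w z \<longrightarrow> w = z"
  using exists_maximal[OF is_poset_flip[OF assms(1)] assms(2,3)] by blast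

lemma lower_cover:
  assumes P: "is_poset le Q" and xy: "x \<in> Q" "y \<in> Q" "le x y" "x \<noteq> y"
  shows "\<exists>z\<in>Q. le x z \<and> covers le Q z y"
proof -
  let ?S = "{z\<in>Q. le x z \<and> le z y \<and> z \<noteq> y}"
  have "x \<in> ?S" using xy P unfolding is_poset_def by blast
  then obtain z where z: "z \<in> ?S" "\<forall>w\<in>?S. le z w \<longrightarrow> w = z"
    using exists_maximal[OF P, of ?S] by blast
  have "covers le Q z y"
    unfolding covers_def
  proof (intro conjI)
    show "\<not> (\<exists>w\<in>Q. le z w \<and> le w y \<and> w \<noteq> z \<and> w \<noteq> y)"
    proof
      assume "\<exists>w\<in>Q. le z w \<and> le w y \<and> w \<noteq> z \<and> w \<noteq> y"
      then obtain w where w: "w\<in>Q" "le z w" "le w y" "w \<noteq> z" "w \<noteq> y" by blast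
      have "le x w" using P z(1) w xy unfolding is_poset_def by blast
      then have "w \<in> ?S" using w by blast
      then show False using z(2) w by blast
    qed
  qed (use z xy in auto)
  then show ?thesis using z by blast
qed

lemma upper_cover:
  assumes P: "is_poset le Q" and xy: "x \<in> Q" "y \<in> Q" "le x y" "x \<noteq> y"
  shows "\<exists>z\<in>Q. le z y \<and> covers le Q x z"
proof -
  let ?S = "{z\<in>Q. le x z \<and> le z y \<and> z \<noteq> x}"
  have "y \<in> ?S" using xy P unfolding is_poset_def by blast
  then obtain z where z: "z \<in> ?S" "\<forall>w\<in>?S. le w z \<longrightarrow> w = z"
    using exists_minimal[OF P, of ?S] by blast
  have "covers le Q x z"
    unfolding covers_def
  proof (intro conjI)
    show "\<not> (\<exists>w\<in>Q. le x w \<and> le w z \<and> w \<noteq> x \<and> w \<noteq> z)"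
    proof
      assume "\<exists>w\<in>Q. le x w \<and> le w z \<and> w \<noteq> x \<and> w \<noteq> z"
      then obtain w where w: "w\<in>Q" "le x w" "le w z" "w \<noteq> x" "w \<noteq> z" by blast
      have "le w y" using P z(1) w xy unfolding is_poset_def by blast
      then have "w \<in> ?S" using w by blast
      then show False using z(2) w by blast
    qed
  qed (use z xy in auto)
  then show ?thesis using z by blast
qed

lemma inductive_lg: "inductive_poset le Q \<Longrightarrow> locally_geometric le Q"
  by (induction rule: inductive_poset.induct) auto



lemma down_card_less:
  assumes P: "is_poset le Q" and "z \<in> Q" "x \<in> Q" "le z x" "z \<noteq> x"
  shows "card {y\<in>Q. le y z} < card {y\<in>Q. le y x}"
proof (rule psubset_card_mono)
  show "finite {y\<in>Q. le y x}" using P unfolding is_poset_def by auto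
  have "x \<in> {y\<in>Q. le y x}" "x \<notin> {y\<in>Q. le y z}" using assms unfolding is_poset_def by blast+
  moreover have "{y\<in>Q. le y z} \<subseteq> {y\<in>Q. le y x}" using assms unfolding is_poset_def by blast
  ultimately show "{y\<in>Q. le y z} \<subset> {y\<in>Q. le y x}" by blast
qed

lemma rank_fun_unique:
  assumes P: "is_poset le Q" "has_bottom le Q" and r1: "is_rank_fun le Q r1"
    and r2: "is_rank_fun le Q r2"
  shows "x \<in> Q \<Longrightarrow> r1 x = r2 x"
proof (induction "card {y\<in>Q. le y x}" arbitrary: x rule: less_induct)
  case (less x)
  show ?case
  proof (cases "x = bottom le Q")
    case True then show ?thesis using r1 r2 unfolding is_rank_fun_def by simp
  next
    case False
    obtain z where z: "z\<in>Q" "covers le Q z x"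
      using lower_cover[OF P(1) bottom_props(1)[OF P] less.prems bottom_props(2)[OF P less.prems]]
        False by metis
    have "card {y\<in>Q. le y z} < card {y\<in>Q. le y x}"
      using down_card_less[OF P(1) z(1) less.prems] z(2) unfolding covers_def by blast
    then have "r1 z = r2 z" using less z by blast
    then show ?thesis using z less.prems r1 r2 unfolding is_rank_fun_def by metis
  qed
qed

lemma rank_strict_mono:
  assumes P: "is_poset le Q" and r: "is_rank_fun le Q rk"
  shows "y \<in> Q \<Longrightarrow> x \<in> Q \<Longrightarrow> le x y \<Longrightarrow> x \<noteq> y \<Longrightarrow> rk x < rk y"
proof (induction "card {w\<in>Q. le w y}" arbitrary: y rule: less_induct)
  case (less y)
  obtain z where z: "z\<in>Q" "le x z" "covers le Q z y"
    using lower_cover[OF P less.prems(2,1,3,4)] by blast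
  have rz: "rk y = Suc (rk z)" using z less.prems r unfolding is_rank_fun_def by blast
  show ?case
  proof (cases "x = z")
    case True then show ?thesis using rz by simp
  next
    case False
    have "card {w\<in>Q. le w z} < card {w\<in>Q. le w y}"
      using down_card_less[OF P z(1) less.prems(1)] z(3) unfolding covers_def by blast
    then have "rk x < rk z" using less z False by blast
    then show ?thesis using rz by simp
  qed
qed

lemma rank_is_rank_fun:
  assumes "ranked le Q" shows "is_rank_fun le Q (rank le Q)"
  using assms unfolding ranked_def rank_def by (metis someI_ex)

lemma rank_eqI:
  assumes "is_poset le Q" "has_bottom le Q" "ranked le Q" "is_rank_fun le Q rk" "x \<in> Q"
  shows "rank le Q x = rk x"
  using rank_fun_unique[OF assms(1,2) rank_is_rank_fun[OF assms(3)] assms(4,5)] .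

fun mobG :: "('a \<Rightarrow> 'a \<Rightarrow> bool) \<Rightarrow> 'a set \<Rightarrow> nat \<Rightarrow> 'a \<Rightarrow> int" where
  "mobG le Q 0 x = (if x = bottom le Q then 1 else 0)"
| "mobG le Q (Suc n) x = (if x = bottom le Q then 1 else
     - (\<Sum>y\<in>{y\<in>Q. le y x \<and> y \<noteq> x}. mobG le Q n y))"

definition mobF :: "('a \<Rightarrow> 'a \<Rightarrow> bool) \<Rightarrow> 'a set \<Rightarrow> 'a \<Rightarrow> int" where
  "mobF le Q x = (if x \<in> Q then mobG le Q (card {y\<in>Q. le y x}) x else 0)"

lemma mobG_stable:
  assumes P: "is_poset le Q"
  shows "x \<in> Q \<Longrightarrow> card {y\<in>Q. le y x} \<le> n \<Longrightarrow> card {y\<in>Q. le y x} \<le> m \<Longrightarrow>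
     mobG le Q n x = mobG le Q m x"
proof (induction n arbitrary: m x)
  case 0
  have "x \<in> {y\<in>Q. le y x}" using 0 P unfolding is_poset_def by blast
  moreover have "finite {y\<in>Q. le y x}" using P unfolding is_poset_def by auto
  ultimately have "card {y\<in>Q. le y x} > 0" by (metis card_gt_0_iff empty_iff)
  then show ?case using 0 by simp
next
  case (Suc n)
  have "x \<in> {y\<in>Q. le y x}" using Suc P unfolding is_poset_def by blast
  moreover have "finite {y\<in>Q. le y x}" using P unfolding is_poset_def by auto
  ultimately have "card {y\<in>Q. le y x} > 0" by (metis card_gt_0_iff empty_iff)
  then obtain m' where m': "m = Suc m'" using Suc by (cases m) auto
  have eq: "mobG le Q n y = mobG le Q m' y" if "y \<in> {y\<in>Q. le y x \<and> y \<noteq> x}" for y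
  proof -
    have "card {w\<in>Q. le w y} < card {w\<in>Q. le w x}"
      using down_card_less[OF P _ Suc.prems(1)] that by blast
    then show ?thesis using Suc.IH[of y m'] that Suc.prems m' by auto
  qed
  have "(\<Sum>y\<in>{y\<in>Q. le y x \<and> y \<noteq> x}. mobG le Q n y) = (\<Sum>y\<in>{y\<in>Q. le y x \<and> y \<noteq> x}. mobG le Q m' y)"
    by (rule sum.cong[OF refl eq])
  then show ?case using m' by simp
qed

lemma mobF_rec:
  assumes P: "is_poset le Q" "has_bottom le Q" and x: "x \<in> Q"
  shows "(\<Sum>y\<in>{y\<in>Q. le y x}. mobF le Q y) = (if x = bottom le Q then 1 else 0)"
proof -
  have fin: "finite {y\<in>Q. le y x}" using P unfolding is_poset_def by auto
  have xin: "x \<in> {y\<in>Q. le y x}" using x P unfolding is_poset_def by blast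
  have split: "(\<Sum>y\<in>{y\<in>Q. le y x}. mobF le Q y) =
     mobF le Q x + (\<Sum>y\<in>{y\<in>Q. le y x \<and> y \<noteq> x}. mobF le Q y)"
  proof -
    have "{y\<in>Q. le y x \<and> y \<noteq> x} = {y\<in>Q. le y x} - {x}" by blast
    then show ?thesis using sum.remove[OF fin xin] by simp
  qed
  show ?thesis
  proof (cases "x = bottom le Q")
    case True
    have emp: "{y\<in>Q. le y x \<and> y \<noteq> x} = {}"
      using True P bottom_props[OF P] unfolding is_poset_def by blast
    have s0: "(\<Sum>y\<in>{y\<in>Q. le y x \<and> y \<noteq> x}. mobF le Q y) = 0" unfolding emp by simp
    have m1: "mobF le Q x = 1" using True x unfolding mobF_def
      by (cases "card {y\<in>Q. le y x}") auto
    have "(\<Sum>y\<in>{y\<in>Q. le y x}. mobF le Q y) = 1" using split s0 m1 by simp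
    then show ?thesis using True by simp
  next
    case False
    have "card {y\<in>Q. le y x} > 0" using fin xin by (metis card_gt_0_iff empty_iff)
    then obtain k where k: "card {y\<in>Q. le y x} = Suc k" by (cases "card {y\<in>Q. le y x}") auto
    have eq: "mobG le Q k y = mobF le Q y" if "y \<in> {y\<in>Q. le y x \<and> y \<noteq> x}" for y
    proof -
      have "card {w\<in>Q. le w y} < card {w\<in>Q. le w x}"
        using down_card_less[OF P(1) _ x] that by blast
      then show ?thesis unfolding mobF_def using mobG_stable[OF P(1), of y] that k by auto
    qed
    have se: "(\<Sum>y\<in>{y\<in>Q. le y x \<and> y \<noteq> x}. mobG le Q k y) = (\<Sum>y\<in>{y\<in>Q. le y x \<and> y \<noteq> x}. mobF le Q y)"
      by (rule sum.cong[OF refl eq])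
    have "mobF le Q x = mobG le Q (Suc k) x" using x k unfolding mobF_def by simp
    also have "\<dots> = - (\<Sum>y\<in>{y\<in>Q. le y x \<and> y \<noteq> x}. mobG le Q k y)" using False by simp
    finally have "mobF le Q x = - (\<Sum>y\<in>{y\<in>Q. le y x \<and> y \<noteq> x}. mobF le Q y)"
      using se by simp
    then show ?thesis using split False by simp
  qed
qed

definition mob_rec :: "('a \<Rightarrow> 'a \<Rightarrow> bool) \<Rightarrow> 'a set \<Rightarrow> ('a \<Rightarrow> int) \<Rightarrow> bool" where
  "mob_rec le Q f \<longleftrightarrow> (\<forall>x\<in>Q. (\<Sum>y\<in>{y\<in>Q. le y x}. f y) = (if x = bottom le Q then 1 else 0)) \<and>
     (\<forall>x. x \<notin> Q \<longrightarrow> f x = 0)"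

lemma mob_rec_unique:
  assumes P: "is_poset le Q" and f: "mob_rec le Q f" and g: "mob_rec le Q g"
  shows "f = g"
proof -
  have "f x = g x" if "x \<in> Q" for x
    using that
  proof (induction "card {y\<in>Q. le y x}" arbitrary: x rule: less_induct)
    case (less x)
    have fin: "finite {y\<in>Q. le y x}" using P unfolding is_poset_def by auto
    have xin: "x \<in> {y\<in>Q. le y x}" using less P unfolding is_poset_def by blast
    have eqs: "(\<Sum>y\<in>{y\<in>Q. le y x}. f y) = (\<Sum>y\<in>{y\<in>Q. le y x}. g y)"
      using f g less.prems unfolding mob_rec_def by simp
    have ih: "(\<Sum>y\<in>{y\<in>Q. le y x} - {x}. f y) = (\<Sum>y\<in>{y\<in>Q. le y x} - {x}. g y)"
    proof (rule sum.cong[OF refl])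
      fix y assume y: "y \<in> {y\<in>Q. le y x} - {x}"
      have "card {w\<in>Q. le w y} < card {w\<in>Q. le w x}"
        using down_card_less[OF P _ less.prems] y by blast
      then show "f y = g y" using less y by blast
    qed
    show ?case using eqs ih sum.remove[OF fin xin, of f] sum.remove[OF fin xin, of g] by simp
  qed
  moreover have "f x = g x" if "x \<notin> Q" for x using that f g unfolding mob_rec_def by simp
  ultimately show ?thesis by blast
qed

lemma mobF_rec':
  assumes "is_poset le Q" "has_bottom le Q" shows "mob_rec le Q (mobF le Q)"
proof -
  have "\<forall>x\<in>Q. (\<Sum>y\<in>{y\<in>Q. le y x}. mobF le Q y) = (if x = bottom le Q then 1 else 0)"
    using mobF_rec[OF assms] by blast
  moreover have "\<forall>x. x \<notin> Q \<longrightarrow> mobF le Q x = 0" by (simp add: mobF_def)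
  ultimately show ?thesis unfolding mob_rec_def by blast
qed

lemma mobius_rec:
  assumes "is_poset le Q" "has_bottom le Q"
  shows "mob_rec le Q (mobius le Q)"
proof -
  have "mobius le Q = mobF le Q"
    unfolding mobius_def
    apply (rule the_equality)
    using mobF_rec'[OF assms] mob_rec_unique[OF assms(1)] unfolding mob_rec_def by blast+
  then show ?thesis using mobF_rec'[OF assms] by simp
qed

lemma mobius_eqI:
  assumes "is_poset le Q" "has_bottom le Q" "mob_rec le Q f"
  shows "mobius le Q = f"
  using mob_rec_unique[OF assms(1) mobius_rec[OF assms(1,2)] assms(3)] .



lemma mob_rec_sum: "mob_rec le Q f \<Longrightarrow> x \<in> Q \<Longrightarrow>
   (\<Sum>y\<in>{y\<in>Q. le y x}. f y) = (if x = bottom le Q then 1 else 0)"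
  unfolding mob_rec_def by blast

lemma mob_rec_zero: "mob_rec le Q f \<Longrightarrow> x \<notin> Q \<Longrightarrow> f x = 0"
  unfolding mob_rec_def by blast

lemma Union_setof_iff: "x \<in> \<Union>{f T | T. Q T} \<longleftrightarrow> (\<exists>T. Q T \<and> x \<in> f T)"
  by blast

lemma poset_subset: "is_poset le P \<Longrightarrow> Q \<subseteq> P \<Longrightarrow> Q \<noteq> {} \<Longrightarrow> is_poset le Q"
  unfolding is_poset_def by (meson finite_subset subsetD)

lemma lub_exists:
  assumes L: "is_lattice le L" and "finite T" "T \<noteq> {}" "T \<subseteq> L"
  shows "\<exists>u. is_lub le L T u"
  using assms(2,3,4)
proof (induction T rule: finite_ne_induct)
  case (singleton t)
  have "le t t" using L singleton unfolding is_lattice_def is_poset_def by blast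
  then have "is_lub le L {t} t" using singleton unfolding is_lub_def upper_bound_def by blast
  then show ?case by blast
next
  case (insert t F)
  obtain u where u: "is_lub le L F u" using insert by blast
  have tL: "t \<in> L" using insert by blast
  have uL: "u \<in> L" using u unfolding is_lub_def upper_bound_def by blast
  obtain w where w: "is_lub le L {t, u} w" using L tL uL unfolding is_lattice_def by blast
  have wL: "w \<in> L" using w unfolding is_lub_def upper_bound_def by blast
  have "is_lub le L (insert t F) w"
    unfolding is_lub_def upper_bound_def
  proof (intro conjI allI impI ballI)
    show "w \<in> L" by (rule wL)
    fix s assume "s \<in> insert t F"
    then show "le s w"
    proof
      assume "s = t" then show ?thesis using w unfolding is_lub_def upper_bound_def by blast
    next
      assume sF: "s \<in> F"
      have "le s u" "le u w" using u w sF unfolding is_lub_def upper_bound_def by blast+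
      moreover have "s \<in> L" using sF insert by blast
      ultimately show ?thesis using L uL wL unfolding is_lattice_def is_poset_def by blast
    qed
  next
    fix v assume v: "v \<in> L \<and> (\<forall>s\<in>insert t F. le s v)"
    then have "le u v" using u unfolding is_lub_def upper_bound_def by blast
    then show "le w v" using v w unfolding is_lub_def upper_bound_def by blast
  qed
  then show ?case by blast
qed

context
  fixes le :: "'a \<Rightarrow> 'a \<Rightarrow> bool" and P :: "'a set"
  assumes lg: "locally_geometric le P"
begin

lemma P_poset: "is_poset le P" using lg unfolding locally_geometric_def by blast
lemma P_hb: "has_bottom le P" using lg unfolding locally_geometric_def by blast
lemma P_bot: "bottom le P \<in> P" "\<And>x. x\<in>P \<Longrightarrow> le (bottom le P) x"
  using bottom_props[OF P_poset P_hb] by auto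
lemma P_refl: "x \<in> P \<Longrightarrow> le x x" using P_poset unfolding is_poset_def by blast
lemma P_antisym: "x \<in> P \<Longrightarrow> y \<in> P \<Longrightarrow> le x y \<Longrightarrow> le y x \<Longrightarrow> x = y"
  using P_poset unfolding is_poset_def by blast
lemma P_trans: "x \<in> P \<Longrightarrow> y \<in> P \<Longrightarrow> z \<in> P \<Longrightarrow> le x y \<Longrightarrow> le y z \<Longrightarrow> le x z"
  using P_poset unfolding is_poset_def by blast
lemma P_fin: "finite P" using P_poset unfolding is_poset_def by blast

lemma down_sub: "down_set le P x \<subseteq> P" unfolding down_set_def by blast

lemma down_mem: "y \<in> down_set le P x \<longleftrightarrow> y \<in> P \<and> le y x" unfolding down_set_def by blast

lemma down_poset: "x \<in> P \<Longrightarrow> is_poset le (down_set le P x)"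
  by (rule poset_subset[OF P_poset down_sub]) (use P_refl down_mem in blast)

lemma down_geom: "x \<in> P \<Longrightarrow> geometric le (down_set le P x)"
  using lg unfolding locally_geometric_def by blast

lemma down_lattice: "x \<in> P \<Longrightarrow> is_lattice le (down_set le P x)"
  using down_geom unfolding geometric_def by blast

lemma down_bottom: "x \<in> P \<Longrightarrow> bottom le (down_set le P x) = bottom le P"
  by (rule bottom_eq[OF down_poset]) (auto simp: down_mem P_bot)

lemma covers_down:
  assumes "x \<in> P" "u \<in> down_set le P x" "v \<in> down_set le P x"
  shows "covers le (down_set le P x) u v \<longleftrightarrow> covers le P u v"
proof -
  have "z \<in> down_set le P x" if "z \<in> P" "le z v" for z
    using that assms P_trans unfolding down_mem by blast
  then have key: "(\<exists>z\<in>down_set le P x. le u z \<and> le z v \<and> z \<noteq> u \<and> z \<noteq> v) \<longleftrightarrow>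
     (\<exists>z\<in>P. le u z \<and> le z v \<and> z \<noteq> u \<and> z \<noteq> v)" using down_sub by blast
  have "u \<in> P" "v \<in> P" using assms down_sub by auto
  then show ?thesis using assms(2,3) unfolding covers_def key by simp
qed

lemma atoms_down:
  assumes x: "x \<in> P"
  shows "atoms le (down_set le P x) = {b \<in> atoms le P. le b x}"
proof -
  have b0: "bottom le P \<in> down_set le P x" using P_bot x down_mem by blast
  have "b \<in> atoms le (down_set le P x) \<longleftrightarrow> b \<in> atoms le P \<and> le b x" for b
  proof -
    have "b \<in> atoms le (down_set le P x) \<longleftrightarrow> b \<in> down_set le P x \<and> covers le P (bottom le P) b"
      unfolding atoms_def down_bottom[OF x] using covers_down[OF x b0] by blast
    also have "\<dots> \<longleftrightarrow> b \<in> atoms le P \<and> le b x"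
      unfolding atoms_def down_mem by blast
    finally show ?thesis .
  qed
  then show ?thesis by blast
qed

lemma atom_props:
  assumes "b \<in> atoms le P"
  shows "b \<in> P" "b \<noteq> bottom le P" "covers le P (bottom le P) b"
  using assms unfolding atoms_def covers_def by auto

lemma atom_le_atom:
  assumes "b \<in> atoms le P" "c \<in> atoms le P" "le b c" shows "b = c"
  using assms unfolding atoms_def covers_def using P_bot by blast

lemma lub_down_mub:
  assumes y: "y \<in> P" and j: "is_lub le (down_set le P y) T j"
  shows "j \<in> min_upper_bounds le P T"
proof -
  have jD: "j \<in> down_set le P y" using j unfolding is_lub_def upper_bound_def by blast
  have ub: "upper_bound le P T j" using j jD down_sub unfolding is_lub_def upper_bound_def by blast
  have minv: "v = j" if "upper_bound le P T v" "le v j" for v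
  proof -
    have vP: "v \<in> P" and jP: "j \<in> P" using that jD unfolding upper_bound_def down_mem by auto
    have "v \<in> down_set le P y" using that jD P_trans[OF vP jP y] y unfolding down_mem upper_bound_def by blast
    then have "upper_bound le (down_set le P y) T v" using that unfolding upper_bound_def by blast
    then have "le j v" using j unfolding is_lub_def by blast
    then show ?thesis using P_antisym[OF vP jP] that by blast
  qed
  show ?thesis unfolding min_upper_bounds_def mem_Collect_eq
    by (intro conjI allI impI ub) (auto intro: minv)
qed

lemma mub_lub_down:
  assumes y: "y \<in> P" and u: "u \<in> min_upper_bounds le P T" and uy: "le u y"
    and T: "finite T" "T \<noteq> {}" "T \<subseteq> P"
  shows "is_lub le (down_set le P y) T u"
proof -
  have uP: "u \<in> P" and ut: "\<forall>t\<in>T. le t u" using u unfolding min_upper_bounds_def upper_bound_def by auto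
  have TD: "T \<subseteq> down_set le P y"
  proof
    fix t assume t: "t \<in> T"
    then have "t \<in> P" "le t u" using T(3) ut by auto
    then show "t \<in> down_set le P y" using P_trans[OF _ uP y _ uy] unfolding down_mem by blast
  qed
  obtain j where j: "is_lub le (down_set le P y) T j" using lub_exists[OF down_lattice[OF y] T(1,2) TD] by blast
  have uD: "u \<in> down_set le P y" using uP uy down_mem by blast
  have "le j u" using j uD ut unfolding is_lub_def upper_bound_def by blast
  moreover have "upper_bound le P T j" using j down_sub unfolding is_lub_def upper_bound_def by blast
  ultimately have "j = u" using u unfolding min_upper_bounds_def by (simp only: mem_Collect_eq)
  then show ?thesis using j by simp
qed

lemma rankP_fun: "is_rank_fun le P (rank le P)"
  using lg rank_is_rank_fun unfolding locally_geometric_def by blast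

context
  fixes a assumes a: "a \<in> atoms le P"
begin

lemma aP: "a \<in> P" and a_ne: "a \<noteq> bottom le P" and a_cov: "covers le P (bottom le P) a"
  using atom_props[OF a] by auto

lemma atoms_sub: "atoms le P \<subseteq> P" unfolding atoms_def by blast

lemma mem_del: "x \<in> deletion le P a \<longleftrightarrow> x = bottom le P \<or>
   (\<exists>T. T \<subseteq> atoms le P - {a} \<and> T \<noteq> {} \<and> x \<in> min_upper_bounds le P T)"
  unfolding deletion_def insert_iff Union_setof_iff conj_assoc ..

lemma mub_sub: "min_upper_bounds le P T \<subseteq> P"
  unfolding min_upper_bounds_def upper_bound_def by blast

lemma del_sub: "deletion le P a \<subseteq> P"
proof
  fix x assume "x \<in> deletion le P a"
  then have "x = bottom le P \<or> (\<exists>T. x \<in> min_upper_bounds le P T)" using mem_del by blast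
  then show "x \<in> P" using mub_sub P_bot by blast
qed

lemma bot_del: "bottom le P \<in> deletion le P a" using mem_del by blast

lemma del_poset: "is_poset le (deletion le P a)"
  by (rule poset_subset[OF P_poset del_sub]) (use bot_del in blast)

lemma del_bot: "bottom le (deletion le P a) = bottom le P"
  by (rule bottom_eq[OF del_poset bot_del]) (use del_sub P_bot(2) in blast)

lemma del_hb: "has_bottom le (deletion le P a)"
  unfolding has_bottom_def using bot_del del_sub P_bot(2) by blast

lemma a_notin_del: "a \<notin> deletion le P a"
proof
  assume "a \<in> deletion le P a"
  then obtain T where T: "T \<subseteq> atoms le P - {a}" "T \<noteq> {}" "a \<in> min_upper_bounds le P T"
    unfolding mem_del using a_ne by blast
  then obtain t where t: "t \<in> T" by blast
  then have "le t a" using T unfolding min_upper_bounds_def upper_bound_def by blast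
  then have "t = a" using atom_le_atom[OF _ a] t T by blast
  then show False using t T by blast
qed

lemma finite_atoms_sub: "T \<subseteq> atoms le P - {a} \<Longrightarrow> finite T"
  by (rule finite_subset[OF _ P_fin]) (use atoms_sub in blast)

lemma del_covers:
  assumes x: "x \<in> deletion le P a" and y: "y \<in> deletion le P a"
    and cov: "covers le (deletion le P a) x y"
  shows "covers le P x y"
proof -
  let ?D = "deletion le P a"
  let ?L = "down_set le P y"
  have xP: "x \<in> P" and yP: "y \<in> P" using x y del_sub by auto
  have lxy: "le x y" and nxy: "x \<noteq> y"
    and nobet: "\<And>z. z \<in> ?D \<Longrightarrow> le x z \<Longrightarrow> le z y \<Longrightarrow> z \<noteq> x \<Longrightarrow> z = y"
    using cov unfolding covers_def by blast+
  have ynb: "y \<noteq> bottom le P" using lxy P_bot(2)[OF xP] P_antisym[OF xP P_bot(1)] nxy by blast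
  then obtain T where T: "T \<subseteq> atoms le P - {a}" "T \<noteq> {}" "y \<in> min_upper_bounds le P T"
    using y mem_del by blast
  have "\<exists>b\<in>T. \<not> le b x"
  proof (rule ccontr)
    assume "\<not> (\<exists>b\<in>T. \<not> le b x)"
    then have "upper_bound le P T x" using xP unfolding upper_bound_def by blast
    then have "x = y" using T(3) lxy unfolding min_upper_bounds_def by blast
    then show False using nxy by blast
  qed
  then obtain b where bT: "b \<in> T" and nbx: "\<not> le b x" by blast
  have bA: "b \<in> atoms le P" using bT T by blast
  have bP: "b \<in> P" using bA atoms_sub by blast
  have lby: "le b y" using bT T(3) unfolding min_upper_bounds_def upper_bound_def by blast
  have xL: "x \<in> ?L" and bL: "b \<in> ?L" using xP bP lxy lby down_mem by auto
  obtain w where w: "is_lub le ?L {x, b} w" using down_lattice[OF yP] xL bL unfolding is_lattice_def by blast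
  have wL: "w \<in> ?L" using w unfolding is_lub_def upper_bound_def by blast
  have wP: "w \<in> P" and lwy: "le w y" using wL down_mem by auto
  have lxw: "le x w" and lbw: "le b w" using w unfolding is_lub_def upper_bound_def by auto
  obtain Tx where Tx: "Tx \<subseteq> atoms le P - {a}"
      "(x = bottom le P \<and> Tx = {}) \<or> (Tx \<noteq> {} \<and> x \<in> min_upper_bounds le P Tx)"
    using x mem_del by blast
  have TxP: "Tx \<subseteq> P" using Tx atoms_sub by blast
  have xlub: "is_lub le ?L Tx x" if "Tx \<noteq> {}"
    using mub_lub_down[OF yP _ lxy finite_atoms_sub[OF Tx(1)] that TxP] Tx that by blast
  have Sl: "is_lub le ?L (insert b Tx) w"
    unfolding is_lub_def upper_bound_def
  proof (intro conjI allI impI ballI)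
    show "w \<in> ?L" by (rule wL)
    fix t assume "t \<in> insert b Tx"
    then show "le t w"
    proof
      assume "t = b" then show ?thesis using lbw by simp
    next
      assume tT: "t \<in> Tx"
      then have "Tx \<noteq> {}" by blast
      then have "le t x" using xlub tT unfolding is_lub_def upper_bound_def by blast
      then show ?thesis using P_trans[OF _ xP wP _ lxw] tT TxP by blast
    qed
  next
    fix v assume v: "v \<in> ?L \<and> (\<forall>t\<in>insert b Tx. le t v)"
    have "le x v"
    proof (cases "Tx = {}")
      case True then have "x = bottom le P" using Tx by blast
      then show ?thesis using P_bot v down_mem by auto
    next
      case False
      then show ?thesis using xlub v unfolding is_lub_def upper_bound_def by blast
    qed
    then have "upper_bound le ?L {x, b} v" using v unfolding upper_bound_def by blast
    then show "le w v" using w unfolding is_lub_def by blast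
  qed
  have "w \<in> min_upper_bounds le P (insert b Tx)" by (rule lub_down_mub[OF yP Sl])
  moreover have "insert b Tx \<subseteq> atoms le P - {a}" using Tx bT T by blast
  ultimately have wD: "w \<in> ?D" using mem_del by blast
  have "w \<noteq> x" using lbw nbx by blast
  then have "w = y" using nobet[OF wD lxw lwy] by blast
  then have wy: "is_lub le ?L {x, b} y" using w by simp
  have bAL: "b \<in> atoms le ?L" using atoms_down[OF yP] bA lby by blast
  have yL: "y \<in> ?L" using yP P_refl down_mem by blast
  have "covers le ?L x y"
    using down_geom[OF yP] xL yL bAL nbx wy unfolding geometric_def by blast
  then show ?thesis using covers_down[OF yP xL yL] by blast
qed

lemma del_rank:
  assumes r: "ranked le (deletion le P a)" and x: "x \<in> deletion le P a"
  shows "rank le (deletion le P a) x = rank le P x"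
proof (rule rank_eqI[OF del_poset del_hb r _ x])
  show "is_rank_fun le (deletion le P a) (rank le P)"
    unfolding is_rank_fun_def del_bot
    using rankP_fun del_covers del_sub unfolding is_rank_fun_def covers_def[of le "deletion le P a"]
    by (metis covers_def del_covers in_mono)
qed

lemma res_mem: "x \<in> restriction le P a \<longleftrightarrow> x \<in> P \<and> le a x"
  unfolding restriction_def up_set_def by blast

lemma res_sub: "restriction le P a \<subseteq> P" using res_mem by blast

lemma a_res: "a \<in> restriction le P a" using res_mem aP P_refl by blast

lemma res_poset: "is_poset le (restriction le P a)"
  by (rule poset_subset[OF P_poset res_sub]) (use a_res in blast)

lemma res_bot: "bottom le (restriction le P a) = a"
  by (rule bottom_eq[OF res_poset a_res]) (use res_mem in blast)

lemma res_hb: "has_bottom le (restriction le P a)"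
  unfolding has_bottom_def using a_res res_mem by blast

lemma res_covers:
  assumes x: "x \<in> restriction le P a" and y: "y \<in> restriction le P a"
    and cov: "covers le (restriction le P a) x y"
  shows "covers le P x y"
proof -
  have xP: "x \<in> P" and ax: "le a x" using x res_mem by auto
  have "z \<in> restriction le P a" if "z \<in> P" "le x z" for z
    using that P_trans[OF aP xP that(1) ax] res_mem by blast
  then have key: "(\<exists>z\<in>restriction le P a. le x z \<and> le z y \<and> z \<noteq> x \<and> z \<noteq> y) \<longleftrightarrow>
     (\<exists>z\<in>P. le x z \<and> le z y \<and> z \<noteq> x \<and> z \<noteq> y)" using res_sub by blast
  show ?thesis using cov x y res_sub unfolding covers_def key by blast
qed

lemma rank_a: "rank le P a = 1"
  using rankP_fun a_cov aP P_bot(1) unfolding is_rank_fun_def by simp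

lemma rank_res_pos:
  assumes x: "x \<in> restriction le P a" shows "rank le P x \<ge> 1"
proof (cases "x = a")
  case True then show ?thesis using rank_a by simp
next
  case False
  have "rank le P a < rank le P x"
    using rank_strict_mono[OF P_poset rankP_fun, of x a] x res_mem aP False by auto
  then show ?thesis using rank_a by simp
qed

lemma res_rank:
  assumes r: "ranked le (restriction le P a)" and x: "x \<in> restriction le P a"
  shows "rank le (restriction le P a) x = rank le P x - 1"
proof (rule rank_eqI[OF res_poset res_hb r _ x])
  show "is_rank_fun le (restriction le P a) (\<lambda>x. rank le P x - 1)"
    unfolding is_rank_fun_def res_bot
  proof (intro conjI ballI impI)
    show "rank le P a - 1 = 0" using rank_a by simp
    fix u v assume u: "u \<in> restriction le P a" and v: "v \<in> restriction le P a"
      and c: "covers le (restriction le P a) u v"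
    have "covers le P u v" by (rule res_covers[OF u v c])
    then have "rank le P v = Suc (rank le P u)"
      using rankP_fun u v res_sub unfolding is_rank_fun_def by blast
    then show "rank le P v - 1 = Suc (rank le P u - 1)" using rank_res_pos[OF u] by simp
  qed
qed

lemma res_sum:
  assumes w: "w \<in> P"
  shows "(\<Sum>y\<in>{y\<in>restriction le P a. le y w}. mobius le (restriction le P a) y) =
    (if w = a then 1 else 0)"
proof (cases "le a w")
  case True
  then have wR: "w \<in> restriction le P a" using w res_mem by blast
  show ?thesis using mob_rec_sum[OF mobius_rec[OF res_poset res_hb] wR] unfolding res_bot .
next
  case False
  have emp: "{y\<in>restriction le P a. le y w} = {}"
    using False P_trans[OF aP _ w] res_mem by blast
  have "w \<noteq> a" using False P_refl[OF aP] by blast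
  then show ?thesis unfolding emp by simp
qed

lemma del_sum:
  assumes w: "w \<in> P" and wD: "w \<notin> deletion le P a"
  shows "(\<Sum>y\<in>{y\<in>deletion le P a. le y w}. mobius le (deletion le P a) y) =
    (if w = a then 1 else 0)"
proof -
  let ?D = "deletion le P a"
  let ?L = "down_set le P w"
  let ?B = "{b \<in> atoms le P - {a}. le b w}"
  have rec: "\<And>x. x \<in> ?D \<Longrightarrow> (\<Sum>y\<in>{y\<in>?D. le y x}. mobius le ?D y) = (if x = bottom le P then 1 else 0)"
    using mob_rec_sum[OF mobius_rec[OF del_poset del_hb]] unfolding del_bot .
  have wnb: "w \<noteq> bottom le P" using wD bot_del by blast
  show ?thesis
  proof (cases "?B = {}")
    case True
    obtain c where c: "c \<in> P" "le c w" "covers le P (bottom le P) c"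
      using upper_cover[OF P_poset P_bot(1) w P_bot(2)[OF w]] wnb by metis
    have cA: "c \<in> atoms le P" using c unfolding atoms_def by blast
    then have "c = a" using True c by blast
    then have aw: "le a w" using c by simp
    have wa: "w = a"
    proof (rule ccontr)
      assume "w \<noteq> a"
      then obtain z where z: "z \<in> P" "le z w" "covers le P a z"
        using upper_cover[OF P_poset aP w aw] by metis
      have aL: "a \<in> ?L" and zL: "z \<in> ?L" using aP aw z down_mem by auto
      have "covers le ?L a z" using covers_down[OF w aL zL] z by blast
      then obtain b where b: "b \<in> atoms le ?L" "\<not> le b a"
        using down_geom[OF w] aL zL unfolding geometric_def by blast
      have "b \<in> atoms le P" "le b w" using b atoms_down[OF w] by auto
      moreover have "b \<noteq> a" using b P_refl[OF aP] by blast
      ultimately show False using True by blast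
    qed
    have "{y\<in>?D. le y w} = {y\<in>?D. le y (bottom le P)}"
    proof -
      have "y = bottom le P" if y: "y \<in> ?D" "le y w" for y
      proof (rule ccontr)
        assume "y \<noteq> bottom le P"
        then obtain T where T: "T \<subseteq> atoms le P - {a}" "T \<noteq> {}" "y \<in> min_upper_bounds le P T"
          using y unfolding mem_del by blast
        then obtain t where t: "t \<in> T" by blast
        have "le t y" using t T unfolding min_upper_bounds_def upper_bound_def by blast
        moreover have "t \<in> P" "y \<in> P" using t T atoms_sub del_sub y by auto
        ultimately have "le t w" using P_trans[OF _ _ w] y by blast
        then show False using True t T by blast
      qed
      moreover have "le (bottom le P) w" "le (bottom le P) (bottom le P)" using P_bot w by auto
      ultimately show ?thesis using bot_del del_sub P_antisym P_bot by blast
    qed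
    then show ?thesis using rec[OF bot_del] wa by simp
  next
    case False
    have BL: "?B \<subseteq> ?L" using atoms_sub down_mem by blast
    have finB: "finite ?B" using finite_atoms_sub[of ?B] by blast
    obtain w' where w': "is_lub le ?L ?B w'"
      using lub_exists[OF down_lattice[OF w] finB False BL] by blast
    have "w' \<in> min_upper_bounds le P ?B" by (rule lub_down_mub[OF w w'])
    moreover have "?B \<subseteq> atoms le P - {a}" by blast
    ultimately have w'D: "w' \<in> ?D" unfolding mem_del using False by (intro disjI2 exI[of _ ?B] conjI)
    have w'L: "w' \<in> ?L" using w' unfolding is_lub_def upper_bound_def by blast
    then have w'P: "w' \<in> P" and w'w: "le w' w" using down_mem by auto
    obtain b where b: "b \<in> ?B" using False by blast
    have bA: "b \<in> atoms le P" using b by blast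
    have bP: "b \<in> P" using bA atoms_sub by blast
    have bw': "le b w'" using b w' unfolding is_lub_def upper_bound_def by blast
    have w'nb: "w' \<noteq> bottom le P"
    proof
      assume "w' = bottom le P"
      then have "b = bottom le P" using bw' P_antisym[OF bP P_bot(1)] P_bot(2)[OF bP] by simp
      then show False using atom_props(2)[OF bA] by blast
    qed
    have wna: "w \<noteq> a"
    proof
      assume "w = a"
      then have "b = a" using atom_le_atom[OF _ a] b by blast
      then show False using b by blast
    qed
    have seteq: "{y\<in>?D. le y w} = {y\<in>?D. le y w'}"
    proof (intro set_eqI iffI)
      fix y assume "y \<in> {y\<in>?D. le y w'}"
      then show "y \<in> {y\<in>?D. le y w}" using P_trans[OF _ w'P w _ w'w] del_sub by blast
    next
      fix y assume y: "y \<in> {y\<in>?D. le y w}"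
      show "y \<in> {y\<in>?D. le y w'}"
      proof (cases "y = bottom le P")
        case True then show ?thesis using y P_bot(2)[OF w'P] by blast
      next
        case False
        then obtain T where T: "T \<subseteq> atoms le P - {a}" "T \<noteq> {}" "y \<in> min_upper_bounds le P T"
          using y unfolding mem_del by blast
        have TP: "T \<subseteq> P" using T atoms_sub by blast
        have yl: "is_lub le ?L T y"
          using mub_lub_down[OF w T(3) _ finite_atoms_sub[OF T(1)] T(2) TP] y by blast
        have yP: "y \<in> P" using y del_sub by blast
        have "T \<subseteq> ?B"
        proof
          fix t assume t: "t \<in> T"
          have "le t y" using t T unfolding min_upper_bounds_def upper_bound_def by blast
          then have "le t w" using P_trans[OF _ yP w] t TP y by blast
          then show "t \<in> ?B" using t T by blast
        qed
        then have "upper_bound le ?L T w'" using w' w'L unfolding is_lub_def upper_bound_def by blast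
        then have "le y w'" using yl unfolding is_lub_def by blast
        then show ?thesis using y by blast
      qed
    qed
    show ?thesis unfolding seteq using rec[OF w'D] w'nb wna by simp
  qed
qed

lemma mobius_split:
  "mobius le P = (\<lambda>x. mobius le (deletion le P a) x - mobius le (restriction le P a) x)"
proof (rule mobius_eqI[OF P_poset P_hb])
  let ?D = "deletion le P a" and ?R = "restriction le P a"
  have mD: "mob_rec le ?D (mobius le ?D)" by (rule mobius_rec[OF del_poset del_hb])
  have mR: "mob_rec le ?R (mobius le ?R)" by (rule mobius_rec[OF res_poset res_hb])
  have zD: "\<And>x. x \<notin> ?D \<Longrightarrow> mobius le ?D x = 0" using mob_rec_zero[OF mD] .
  have zR: "\<And>x. x \<notin> ?R \<Longrightarrow> mobius le ?R x = 0" using mob_rec_zero[OF mR] .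
  show "mob_rec le P (\<lambda>x. mobius le ?D x - mobius le ?R x)"
    unfolding mob_rec_def
  proof (intro conjI ballI allI impI)
    fix x assume x: "x \<notin> P"
    have "x \<notin> ?D" "x \<notin> ?R" using x del_sub res_sub by blast+
    then show "mobius le ?D x - mobius le ?R x = 0" by (simp add: zD zR)
  next
    fix w assume w: "w \<in> P"
    have fin: "finite {y\<in>P. le y w}" using P_fin by simp
    have sD: "(\<Sum>y\<in>{y\<in>P. le y w}. mobius le ?D y) = (\<Sum>y\<in>{y\<in>?D. le y w}. mobius le ?D y)"
      by (rule sum.mono_neutral_right[OF fin]) (use del_sub zD in auto)
    have sR: "(\<Sum>y\<in>{y\<in>P. le y w}. mobius le ?R y) = (\<Sum>y\<in>{y\<in>?R. le y w}. mobius le ?R y)"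
      by (rule sum.mono_neutral_right[OF fin]) (use res_sub zR in auto)
    have "(\<Sum>y\<in>{y\<in>P. le y w}. mobius le ?D y - mobius le ?R y) =
      (\<Sum>y\<in>{y\<in>?D. le y w}. mobius le ?D y) - (\<Sum>y\<in>{y\<in>?R. le y w}. mobius le ?R y)"
      by (simp add: sum_subtractf sD sR)
    also have "\<dots> = (if w = bottom le P then 1 else 0)"
    proof (cases "w \<in> ?D")
      case True
      have "(\<Sum>y\<in>{y\<in>?D. le y w}. mobius le ?D y) = (if w = bottom le P then 1 else 0)"
        using mob_rec_sum[OF mD True] unfolding del_bot .
      moreover have "w \<noteq> a" using True a_notin_del by blast
      ultimately show ?thesis using res_sum[OF w] by simp
    next
      case False
      have "w \<noteq> bottom le P" using False bot_del by blast
      then show ?thesis using res_sum[OF w] del_sum[OF w False] by simp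
    qed
    finally show "(\<Sum>y\<in>{y\<in>P. le y w}. mobius le ?D y - mobius le ?R y) = (if w = bottom le P then 1 else 0)" .
  qed
qed

end

end



lemma Max_rank_ge:
  assumes "finite Q" "x \<in> Q" shows "rk x \<le> Max (rk ` Q)"
  using assms by simp

context
  fixes le :: "'a \<Rightarrow> 'a \<Rightarrow> bool" and P :: "'a set" and a :: 'a
  assumes lg: "locally_geometric le P" and a: "a \<in> atoms le P"
begin

lemma char_poly_split:
  assumes rD: "ranked le (deletion le P a)" and rR: "ranked le (restriction le P a)"
  shows "char_poly le P =
    monom 1 (poset_rank le P - poset_rank le (deletion le P a)) * char_poly le (deletion le P a)
  - monom 1 (poset_rank le P - 1 - poset_rank le (restriction le P a)) * char_poly le (restriction le P a)"
proof -
  let ?D = "deletion le P a" and ?R = "restriction le P a"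
  let ?r = "poset_rank le P" and ?rD = "poset_rank le ?D" and ?rR = "poset_rank le ?R"
  let ?rk = "rank le P"
  have finP: "finite P" using P_fin[OF lg] .
  have finD: "finite ?D" using finite_subset[OF del_sub[OF lg a] finP] .
  have finR: "finite ?R" using finite_subset[OF res_sub[OF lg a] finP] .
  have rk_le: "\<And>x. x \<in> P \<Longrightarrow> ?rk x \<le> ?r" unfolding poset_rank_def using finP by simp
  have zD: "\<And>x. x \<notin> ?D \<Longrightarrow> mobius le ?D x = 0"
    using mob_rec_zero[OF mobius_rec[OF del_poset[OF lg a] del_hb[OF lg a]]] .
  have zR: "\<And>x. x \<notin> ?R \<Longrightarrow> mobius le ?R x = 0"
    using mob_rec_zero[OF mobius_rec[OF res_poset[OF lg a] res_hb[OF lg a]]] .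
  have rkD: "\<And>x. x \<in> ?D \<Longrightarrow> rank le ?D x = ?rk x" using del_rank[OF lg a rD] .
  have rkD_le: "\<And>x. x \<in> ?D \<Longrightarrow> ?rk x \<le> ?rD"
    unfolding poset_rank_def using finD rkD by (metis Max_rank_ge)
  have rD_le: "?rD \<le> ?r"
  proof -
    have "?rD \<in> rank le ?D ` ?D" unfolding poset_rank_def
      using finD bot_del[OF lg a] by (intro Max_in) auto
    then obtain x0 where "x0 \<in> ?D" "?rD = rank le ?D x0" by blast
    then show ?thesis using rkD rk_le del_sub[OF lg a] by auto
  qed
  have rkR: "\<And>x. x \<in> ?R \<Longrightarrow> rank le ?R x = ?rk x - 1" using res_rank[OF lg a rR] .
  have rkR_pos: "\<And>x. x \<in> ?R \<Longrightarrow> ?rk x \<ge> 1" using rank_res_pos[OF lg a] .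
  have rkR_le: "\<And>x. x \<in> ?R \<Longrightarrow> ?rk x - 1 \<le> ?rR"
    unfolding poset_rank_def using finR rkR by (metis Max_rank_ge)
  have rR_le: "?rR \<le> ?r - 1"
  proof -
    have "?rR \<in> rank le ?R ` ?R" unfolding poset_rank_def
      using finR a_res[OF lg a] by (intro Max_in) auto
    then obtain x0 where "x0 \<in> ?R" "?rR = rank le ?R x0" by blast
    then show ?thesis using rkR rk_le res_sub[OF lg a] by fastforce
  qed
  have "char_poly le P = (\<Sum>x\<in>P. monom (mobius le ?D x - mobius le ?R x) (?r - ?rk x))"
    unfolding char_poly_def mobius_split[OF lg a] ..
  also have "\<dots> = (\<Sum>x\<in>P. monom (mobius le ?D x) (?r - ?rk x)) - (\<Sum>x\<in>P. monom (mobius le ?R x) (?r - ?rk x))"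
    by (simp add: sum_subtractf flip: diff_monom)
  also have "(\<Sum>x\<in>P. monom (mobius le ?D x) (?r - ?rk x)) = (\<Sum>x\<in>?D. monom (mobius le ?D x) (?r - ?rk x))"
    by (rule sum.mono_neutral_right[OF finP del_sub[OF lg a]]) (simp add: zD)
  also have "\<dots> = (\<Sum>x\<in>?D. monom 1 (?r - ?rD) * monom (mobius le ?D x) (?rD - rank le ?D x))"
  proof (rule sum.cong[OF refl])
    fix x assume x: "x \<in> ?D"
    have "?r - ?rk x = (?r - ?rD) + (?rD - rank le ?D x)" using rkD[OF x] rkD_le[OF x] rD_le by simp
    then show "monom (mobius le ?D x) (?r - ?rk x) = monom 1 (?r - ?rD) * monom (mobius le ?D x) (?rD - rank le ?D x)"
      by (simp add: mult_monom)
  qed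
  also have "\<dots> = monom 1 (?r - ?rD) * char_poly le ?D"
    unfolding char_poly_def by (simp add: sum_distrib_left)
  also have "(\<Sum>x\<in>P. monom (mobius le ?R x) (?r - ?rk x)) = (\<Sum>x\<in>?R. monom (mobius le ?R x) (?r - ?rk x))"
    by (rule sum.mono_neutral_right[OF finP res_sub[OF lg a]]) (simp add: zR)
  also have "\<dots> = (\<Sum>x\<in>?R. monom 1 (?r - 1 - ?rR) * monom (mobius le ?R x) (?rR - rank le ?R x))"
  proof (rule sum.cong[OF refl])
    fix x assume x: "x \<in> ?R"
    have "?rk x \<le> ?r" using rk_le x res_sub[OF lg a] by blast
    then have "?r - ?rk x = (?r - 1 - ?rR) + (?rR - rank le ?R x)"
      using rkR[OF x] rkR_pos[OF x] rkR_le[OF x] rR_le by simp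
    then show "monom (mobius le ?R x) (?r - ?rk x) = monom 1 (?r - 1 - ?rR) * monom (mobius le ?R x) (?rR - rank le ?R x)"
      by (simp add: mult_monom)
  qed
  also have "\<dots> = monom 1 (?r - 1 - ?rR) * char_poly le ?R"
    unfolding char_poly_def by (simp add: sum_distrib_left)
  finally show ?thesis .
qed

end

theorem proposition3p8:
  fixes le :: "'a \<Rightarrow> 'a \<Rightarrow> bool" and P :: "'a set"
  assumes "inductive_poset le P"
  shows "divisional_poset le P"
  using assms
proof (induction rule: inductive_poset.induct)
  case (base z)
  then show ?case by (rule divisional_poset.base)
next
  case (step P a)
  have rD: "ranked le (deletion le P a)" using inductive_lg[OF step.hyps(3)] unfolding locally_geometric_def by blast
  have rR: "ranked le (restriction le P a)" using inductive_lg[OF step.hyps(4)] unfolding locally_geometric_def by blast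
  have "char_poly le (restriction le P a) dvd char_poly le P"
    unfolding char_poly_split[OF step.hyps(1,2) rD rR]
    by (intro dvd_diff dvd_mult step.hyps(5) dvd_refl)
  then show ?case by (rule divisional_poset.step[OF step.hyps(1,2) step.IH(2)])
qed


end
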